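(* Let $(A,\boxplus,0)$ be a mosaic satisfying (Lms1) $0,x\in x\boxplus x$ for all $x\in A$ and (Lms2) $(x\boxplus x)\boxplus(x\boxplus x)=x\boxplus x$ for all $x\in A$. Then for every $x\in A$, $A_x:=x\boxplus x$ is a strong submosaic of $A$. Moreover, for any strong submosaic $B$ of $A$, \[ B=\bigcup_{x\in B}A_x=\bigcup_{x\in B}B_x, \] where $B_x:=(x\boxplus x)\cap B$.
   Context: A multioperation on $A$ is a function $\boxplus:A\times A\to\wp(A)$; for subsets, $X\boxplus Y:=\bigcup_{x\in X,y\in Y}x\boxplus y$. A mosaic $(A,\boxplus,e)$ is a set with a multioperation with neutral element $e$ ($e\boxplus x=x\boxplus e=\{x\}$) that is $\rho$-reversible for some endofunction $\rho$ ($z\in x\boxplus y$ implies $x\in z\boxplus\rho(y)$ and $y\in\rho(x)\boxplus z$). A submosaic is a subset $B\ni e$ such that, with the induced multioperation $x\boxplus_B y:=(x\boxplus y)\cap B$, the inclusion $B\to A$ is an embedding of magmata and $(B,\boxplus_B,e)$ is a mosaic; it is a strong submosaic if moreover the inclusion is a strong morphism, i.e. $x\boxplus y\subseteq B$ for all $x,y\in B$. *)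

theory Defs
  imports Main
begin

text \<open>A multioperation on a carrier set A is modelled as a function
  op :: 'a \<Rightarrow> 'a \<Rightarrow> 'a set, required to take values in subsets of A
  on arguments from A.\<close>

definition setop :: "('a \<Rightarrow> 'a \<Rightarrow> 'a set) \<Rightarrow> 'a set \<Rightarrow> 'a set \<Rightarrow> 'a set" where
  "setop op X Y = (\<Union>x\<in>X. \<Union>y\<in>Y. op x y)"

definition multiop_on :: "'a set \<Rightarrow> ('a \<Rightarrow> 'a \<Rightarrow> 'a set) \<Rightarrow> bool" where
  "multiop_on A op \<longleftrightarrow> (\<forall>x\<in>A. \<forall>y\<in>A. op x y \<subseteq> A)"

definition reversible_wrt :: "'a set \<Rightarrow> ('a \<Rightarrow> 'a \<Rightarrow> 'a set) \<Rightarrow> ('a \<Rightarrow> 'a) \<Rightarrow> bool" where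
  "reversible_wrt A op \<rho> \<longleftrightarrow>
     (\<forall>x\<in>A. \<rho> x \<in> A) \<and>
     (\<forall>x\<in>A. \<forall>y\<in>A. \<forall>z\<in>A. z \<in> op x y \<longrightarrow> x \<in> op z (\<rho> y) \<and> y \<in> op (\<rho> x) z)"

definition mosaic :: "'a set \<Rightarrow> ('a \<Rightarrow> 'a \<Rightarrow> 'a set) \<Rightarrow> 'a \<Rightarrow> bool" where
  "mosaic A op e \<longleftrightarrow>
     multiop_on A op \<and> e \<in> A \<and>
     (\<forall>x\<in>A. op e x = {x} \<and> op x e = {x}) \<and>
     (\<exists>\<rho>. reversible_wrt A op \<rho>)"

definition induced_op :: "'a set \<Rightarrow> ('a \<Rightarrow> 'a \<Rightarrow> 'a set) \<Rightarrow> 'a \<Rightarrow> 'a \<Rightarrow> 'a set" where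
  "induced_op B op x y = op x y \<inter> B"

definition magma_morphism ::
  "'a set \<Rightarrow> ('a \<Rightarrow> 'a \<Rightarrow> 'a set) \<Rightarrow> 'b set \<Rightarrow> ('b \<Rightarrow> 'b \<Rightarrow> 'b set) \<Rightarrow> ('a \<Rightarrow> 'b) \<Rightarrow> bool" where
  "magma_morphism A opA C opC f \<longleftrightarrow>
     (\<forall>x\<in>A. f x \<in> C) \<and> (\<forall>x\<in>A. \<forall>y\<in>A. f ` opA x y \<subseteq> opC (f x) (f y))"

definition strong_magma_morphism ::
  "'a set \<Rightarrow> ('a \<Rightarrow> 'a \<Rightarrow> 'a set) \<Rightarrow> 'b set \<Rightarrow> ('b \<Rightarrow> 'b \<Rightarrow> 'b set) \<Rightarrow> ('a \<Rightarrow> 'b) \<Rightarrow> bool" where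
  "strong_magma_morphism A opA C opC f \<longleftrightarrow>
     (\<forall>x\<in>A. f x \<in> C) \<and> (\<forall>x\<in>A. \<forall>y\<in>A. f ` opA x y = opC (f x) (f y))"

definition magma_embedding ::
  "'a set \<Rightarrow> ('a \<Rightarrow> 'a \<Rightarrow> 'a set) \<Rightarrow> 'b set \<Rightarrow> ('b \<Rightarrow> 'b \<Rightarrow> 'b set) \<Rightarrow> ('a \<Rightarrow> 'b) \<Rightarrow> bool" where
  "magma_embedding A opA C opC f \<longleftrightarrow>
     magma_morphism A opA C opC f \<and> inj_on f A \<and>
     (\<forall>x\<in>A. \<forall>y\<in>A. \<forall>z\<in>A. f z \<in> opC (f x) (f y) \<longrightarrow> z \<in> opA x y)"

definition submosaic :: "'a set \<Rightarrow> ('a \<Rightarrow> 'a \<Rightarrow> 'a set) \<Rightarrow> 'a \<Rightarrow> 'a set \<Rightarrow> bool" where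
  "submosaic A op e B \<longleftrightarrow>
     B \<subseteq> A \<and> e \<in> B \<and>
     magma_embedding B (induced_op B op) A op id \<and>
     mosaic B (induced_op B op) e"

definition strong_submosaic :: "'a set \<Rightarrow> ('a \<Rightarrow> 'a \<Rightarrow> 'a set) \<Rightarrow> 'a \<Rightarrow> 'a set \<Rightarrow> bool" where
  "strong_submosaic A op e B \<longleftrightarrow>
     submosaic A op e B \<and> strong_magma_morphism B (induced_op B op) A op id"

end

theory Submission
  imports Defs
begin

theorem mainTheorem11:
  fixes A :: "'a set" and op :: "'a \<Rightarrow> 'a \<Rightarrow> 'a set" and e :: 'a
  assumes mos: "mosaic A op e"
    and Lms1: "\<forall>x\<in>A. e \<in> op x x \<and> x \<in> op x x"
    and Lms2: "\<forall>x\<in>A. setop op (op x x) (op x x) = op x x"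
  shows "(\<forall>x\<in>A. strong_submosaic A op e (op x x)) \<and>
         (\<forall>B. strong_submosaic A op e B \<longrightarrow>
              B = (\<Union>x\<in>B. op x x) \<and> B = (\<Union>x\<in>B. op x x \<inter> B))"
proof (intro conjI ballI allI impI)
  have mA: "multiop_on A op" and eA: "e \<in> A"
    and neut: "\<forall>x\<in>A. op e x = {x} \<and> op x e = {x}"
    using mos unfolding mosaic_def by auto
  obtain \<rho> where rho: "reversible_wrt A op \<rho>" using mos unfolding mosaic_def by auto
  have rhoid: "\<rho> a = a" if "a \<in> A" for a
  proof -
    have "\<rho> a \<in> A" using rho that unfolding reversible_wrt_def by auto
    moreover have "a \<in> op e (\<rho> a)" using rho that Lms1 eA mA
      unfolding reversible_wrt_def multiop_on_def by blast
    ultimately show ?thesis using neut by auto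
  qed
  fix x assume xA: "x \<in> A"
  define B where "B = op x x"
  have BA: "B \<subseteq> A" using mA xA unfolding B_def multiop_on_def by auto
  have eB: "e \<in> B" using Lms1 xA B_def by auto
  have clos: "op a b \<subseteq> B" if "a \<in> B" "b \<in> B" for a b
    using Lms2 xA that unfolding B_def setop_def by blast
  have sub: "submosaic A op e B"
    unfolding submosaic_def
  proof (intro conjI)
    show "magma_embedding B (induced_op B op) A op id"
      unfolding magma_embedding_def magma_morphism_def induced_op_def using BA by auto
    show "mosaic B (induced_op B op) e"
      unfolding mosaic_def
    proof (intro conjI)
      show "multiop_on B (induced_op B op)" unfolding multiop_on_def induced_op_def by auto
      show "\<forall>xa\<in>B. induced_op B op e xa = {xa} \<and> induced_op B op xa e = {xa}"
        unfolding induced_op_def using neut BA by auto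
      show "\<exists>\<rho>. reversible_wrt B (induced_op B op) \<rho>"
      proof (intro exI[of _ \<rho>])
        show "reversible_wrt B (induced_op B op) \<rho>"
          unfolding reversible_wrt_def induced_op_def
        proof (intro conjI ballI impI)
          fix a assume "a \<in> B" thus "\<rho> a \<in> B" using rhoid BA by auto
        next
          fix a b z assume "a \<in> B" "b \<in> B" "z \<in> B" "z \<in> op a b \<inter> B"
          moreover have "a \<in> op z (\<rho> b) \<and> b \<in> op (\<rho> a) z"
            using rho calculation BA unfolding reversible_wrt_def by blast
          ultimately show "a \<in> op z (\<rho> b) \<inter> B" "b \<in> op (\<rho> a) z \<inter> B" by auto
        qed
      qed
    qed (use eB in auto)
  qed (use BA eB in auto)
  show "strong_submosaic A op e (op x x)"
    unfolding B_def[symmetric] strong_submosaic_def strong_magma_morphism_def induced_op_def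
    using sub BA clos by auto
next
  fix B assume sB: "strong_submosaic A op e B"
  hence BA: "B \<subseteq> A" and st: "\<forall>a\<in>B. \<forall>b\<in>B. id ` induced_op B op a b = op a b"
    unfolding strong_submosaic_def submosaic_def strong_magma_morphism_def by auto
  have clos: "op a a \<subseteq> B" if "a \<in> B" for a
    proof - have "op a a = op a a \<inter> B" using st that unfolding induced_op_def by simp thus ?thesis by blast qed
  show "B = (\<Union>x\<in>B. op x x)" using clos Lms1 BA by blast
  show "B = (\<Union>x\<in>B. op x x \<inter> B)" using clos Lms1 BA by blast
qed

end
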